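(* Let $N\ge1$ be an integer, $0<\lambda<1$ and $\lambda^N\le\delta\le1$, and put $k_+=\lceil\log_\lambda\delta\rceil$, $k_-=\lfloor\log_\lambda\delta\rfloor$. Then $$\frac{(N-k_+)\lambda}{k_++(N-k_+)\lambda}\le F(N,\delta,\lambda)\le\frac{(N-k_-)\lambda}{k_-+(N-k_-)\lambda}.$$
   Context: Let $\mathcal H$ be a Hilbert space of finite dimension $D\ge 2$ and $|\Psi\rangle\in\mathcal H$ a unit vector. For $0\le\lambda<1$ let $\Omega_\lambda=|\Psi\rangle\langle\Psi|+\lambda(1-|\Psi\rangle\langle\Psi|)$. For a density operator $\rho$ on $\mathcal H^{\otimes(N+1)}$ put $p_\rho=\mathrm{tr}[(\Omega_\lambda^{\otimes N}\otimes 1)\rho]$ and $f_\rho=\mathrm{tr}[(\Omega_\lambda^{\otimes N}\otimes|\Psi\rangle\langle\Psi|)\rho]$, and $F(N,\delta,\lambda)=\min\{f_\rho/p_\rho:p_\rho\ge\delta\}$, the minimum over permutation-invariant density operators on $\mathcal H^{\otimes(N+1)}$. *)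

theory Defs
  imports "HOL-Analysis.Analysis" "HOL-Combinatorics.Permutations"
begin

text \<open>The Hilbert space H has an orthonormal basis indexed by the finite type 'd,
  so D = CARD('d). A basis vector of the n-fold tensor power is indexed by a tuple
  in {..<n} ->E UNIV. Operators on the n-fold tensor power are given by their
  matrix entries in this product basis.\<close>

type_synonym 'd idx = "nat \<Rightarrow> 'd"
type_synonym 'd op = "'d idx \<Rightarrow> 'd idx \<Rightarrow> complex"

definition tuples :: "nat \<Rightarrow> ('d::finite) idx set" where
  "tuples n = ({..<n} \<rightarrow>\<^sub>E (UNIV :: 'd set))"

definition qform :: "nat \<Rightarrow> ('d::finite) op \<Rightarrow> ('d idx \<Rightarrow> complex) \<Rightarrow> complex" where
  "qform n A v = (\<Sum>i\<in>tuples n. \<Sum>j\<in>tuples n. cnj (v i) * A i j * v j)"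

definition trace_op :: "nat \<Rightarrow> ('d::finite) op \<Rightarrow> complex" where
  "trace_op n A = (\<Sum>i\<in>tuples n. A i i)"

text \<open>Positive semidefinite (hence Hermitian) operator of unit trace.\<close>
definition density_op :: "nat \<Rightarrow> ('d::finite) op \<Rightarrow> bool" where
  "density_op n \<rho> \<longleftrightarrow>
     (\<forall>v. qform n \<rho> v \<in> \<real> \<and> 0 \<le> Re (qform n \<rho> v)) \<and> trace_op n \<rho> = 1"

text \<open>Invariance under all permutations of the tensor factors:
  P_sigma rho P_sigma^dagger = rho.\<close>
definition perm_invariant :: "nat \<Rightarrow> ('d::finite) op \<Rightarrow> bool" where
  "perm_invariant n \<rho> \<longleftrightarrow>
     (\<forall>\<sigma>. \<sigma> permutes {..<n} \<longrightarrow>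
        (\<forall>i\<in>tuples n. \<forall>j\<in>tuples n. \<rho> (i \<circ> \<sigma>) (j \<circ> \<sigma>) = \<rho> i j))"

definition unit_vec :: "('d::finite \<Rightarrow> complex) \<Rightarrow> bool" where
  "unit_vec \<psi> \<longleftrightarrow> (\<Sum>a\<in>UNIV. (cmod (\<psi> a))\<^sup>2) = 1"

definition proj :: "('d::finite \<Rightarrow> complex) \<Rightarrow> 'd \<Rightarrow> 'd \<Rightarrow> complex" where
  "proj \<psi> a b = \<psi> a * cnj (\<psi> b)"

definition Omega :: "('d::finite \<Rightarrow> complex) \<Rightarrow> real \<Rightarrow> 'd \<Rightarrow> 'd \<Rightarrow> complex" where
  "Omega \<psi> lam a b = proj \<psi> a b + complex_of_real lam * ((if a = b then 1 else 0) - proj \<psi> a b)"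

text \<open>Omega^{tensor N} tensor X on H^{tensor (N+1)} (X acts on factor number N).\<close>
definition omega_tensor :: "nat \<Rightarrow> ('d::finite \<Rightarrow> complex) \<Rightarrow> real \<Rightarrow> ('d \<Rightarrow> 'd \<Rightarrow> complex) \<Rightarrow> 'd op" where
  "omega_tensor N \<psi> lam X i j = (\<Prod>k<N. Omega \<psi> lam (i k) (j k)) * X (i N) (j N)"

definition tr_prod :: "nat \<Rightarrow> ('d::finite) op \<Rightarrow> 'd op \<Rightarrow> complex" where
  "tr_prod n A \<rho> = (\<Sum>i\<in>tuples n. \<Sum>j\<in>tuples n. A i j * \<rho> j i)"

definition p_val :: "nat \<Rightarrow> ('d::finite \<Rightarrow> complex) \<Rightarrow> real \<Rightarrow> 'd op \<Rightarrow> real" where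
  "p_val N \<psi> lam \<rho> = Re (tr_prod (Suc N) (omega_tensor N \<psi> lam (\<lambda>a b. if a = b then 1 else 0)) \<rho>)"

definition f_val :: "nat \<Rightarrow> ('d::finite \<Rightarrow> complex) \<Rightarrow> real \<Rightarrow> 'd op \<Rightarrow> real" where
  "f_val N \<psi> lam \<rho> = Re (tr_prod (Suc N) (omega_tensor N \<psi> lam (proj \<psi>)) \<rho>)"

text \<open>F(N, delta, lambda): the minimum (rendered as infimum) of f/p over
  permutation-invariant density operators on H^{tensor (N+1)} with p >= delta.\<close>
definition F_fid :: "nat \<Rightarrow> real \<Rightarrow> real \<Rightarrow> ('d::finite \<Rightarrow> complex) \<Rightarrow> real" where
  "F_fid N \<delta> lam \<psi> = Inf {f_val N \<psi> lam \<rho> / p_val N \<psi> lam \<rho> | \<rho>.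
       density_op (Suc N) \<rho> \<and> perm_invariant (Suc N) \<rho> \<and> p_val N \<psi> lam \<rho> \<ge> \<delta>}"

end

theory Submission
  imports Defs
begin


definition tensor :: "nat \<Rightarrow> (nat \<Rightarrow> 'd \<Rightarrow> 'd \<Rightarrow> complex) \<Rightarrow> ('d::finite) op" where
  "tensor n F i j = (\<Prod>k<n. F k (i k) (j k))"

definition pair :: "('d::finite \<Rightarrow> 'd \<Rightarrow> complex) \<Rightarrow> ('d \<Rightarrow> 'd \<Rightarrow> complex) \<Rightarrow> complex" where
  "pair A B = (\<Sum>a\<in>UNIV. \<Sum>b\<in>UNIV. A a b * B b a)"

lemma finite_tuples[simp]: "finite (tuples n :: ('d::finite) idx set)"
  unfolding tuples_def by (auto intro: finite_PiE)

lemma sum_tuples_prod: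
  "(\<Sum>i\<in>tuples n. \<Prod>k<n. g k (i k)) = (\<Prod>k<n. \<Sum>a\<in>(UNIV::'d::finite set). (g k a :: complex))"
  unfolding tuples_def by (subst prod_sum_PiE) auto

lemma tr_prod_tensor:
  "tr_prod n (tensor n F) (tensor n G) = (\<Prod>k<n. pair (F k) (G k))"
proof -
  have "tr_prod n (tensor n F) (tensor n G) =
     (\<Sum>i\<in>tuples n. \<Sum>j\<in>tuples n. \<Prod>k<n. F k (i k) (j k) * G k (j k) (i k))"
    unfolding tr_prod_def tensor_def by (simp add: prod.distrib)
  also have "\<dots> = (\<Sum>i\<in>tuples n. \<Prod>k<n. \<Sum>b\<in>UNIV. F k (i k) b * G k b (i k))"
    by (rule sum.cong[OF refl], rule sum_tuples_prod)
  also have "\<dots> = (\<Prod>k<n. pair (F k) (G k))"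
    unfolding pair_def by (rule sum_tuples_prod)
  finally show ?thesis .
qed

lemma trace_tensor:
  "trace_op n (tensor n F) = (\<Prod>k<n. \<Sum>a\<in>UNIV. F k a a)"
  unfolding trace_op_def tensor_def by (rule sum_tuples_prod)

lemma tensor_gram:
  assumes "\<And>k a b. k < n \<Longrightarrow> F k a b = (\<Sum>x\<in>UNIV. u k x a * cnj (u k x b))"
  shows "tensor n F i j = (\<Sum>x\<in>tuples n. (\<Prod>k<n. u k (x k) (i k)) * cnj (\<Prod>k<n. u k (x k) (j k)))"
proof -
  have "tensor n F i j = (\<Prod>k<n. \<Sum>x\<in>UNIV. u k x (i k) * cnj (u k x (j k)))"
    unfolding tensor_def using assms by (intro prod.cong) auto
  also have "\<dots> = (\<Sum>x\<in>tuples n. \<Prod>k<n. u k (x k) (i k) * cnj (u k (x k) (j k)))"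
    by (rule sum_tuples_prod[symmetric])
  also have "\<dots> = (\<Sum>x\<in>tuples n. (\<Prod>k<n. u k (x k) (i k)) * cnj (\<Prod>k<n. u k (x k) (j k)))"
    by (simp add: prod.distrib)
  finally show ?thesis .
qed

lemma qform_gram:
  fixes W :: "'x \<Rightarrow> ('d::finite) idx \<Rightarrow> complex"
  assumes "finite X" and "\<And>i j. A i j = (\<Sum>x\<in>X. W x i * cnj (W x j))"
  shows "qform n A v = (\<Sum>x\<in>X. complex_of_real ((cmod (\<Sum>i\<in>tuples n. cnj (v i) * W x i))\<^sup>2))"
proof -
  have "qform n A v = (\<Sum>i\<in>tuples n. \<Sum>j\<in>tuples n. \<Sum>x\<in>X. cnj (v i) * W x i * cnj (W x j) * v j)"
    unfolding qform_def assms(2) by (simp add: sum_distrib_left sum_distrib_right mult.assoc)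
  also have "\<dots> = (\<Sum>i\<in>tuples n. \<Sum>x\<in>X. \<Sum>j\<in>tuples n. cnj (v i) * W x i * cnj (W x j) * v j)"
    by (rule sum.cong[OF refl], rule sum.swap)
  also have "\<dots> = (\<Sum>x\<in>X. \<Sum>i\<in>tuples n. \<Sum>j\<in>tuples n. cnj (v i) * W x i * cnj (W x j) * v j)"
    by (rule sum.swap)
  also have "\<dots> = (\<Sum>x\<in>X. \<Sum>i\<in>tuples n. \<Sum>j\<in>tuples n. (cnj (v i) * W x i) * cnj (cnj (v j) * W x j))"
    by (simp add: mult_ac)
  also have "\<dots> = (\<Sum>x\<in>X. (\<Sum>i\<in>tuples n. cnj (v i) * W x i) * cnj (\<Sum>j\<in>tuples n. cnj (v j) * W x j))"
    by (simp only: cnj_sum sum_product)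
  also have "\<dots> = (\<Sum>x\<in>X. complex_of_real ((cmod (\<Sum>i\<in>tuples n. cnj (v i) * W x i))\<^sup>2))"
    by (rule sum.cong[OF refl], rule complex_norm_square[symmetric])
  finally show ?thesis .
qed

lemma tr_prod_gram:
  fixes W :: "'x \<Rightarrow> ('d::finite) idx \<Rightarrow> complex"
  assumes "finite X" and "\<And>i j. A i j = (\<Sum>x\<in>X. W x i * cnj (W x j))"
  shows "tr_prod n A \<rho> = (\<Sum>x\<in>X. qform n \<rho> (W x))"
proof -
  have "tr_prod n A \<rho> = (\<Sum>i\<in>tuples n. \<Sum>j\<in>tuples n. \<Sum>x\<in>X. cnj (W x j) * \<rho> j i * W x i)"
    unfolding tr_prod_def assms(2) by (simp add: sum_distrib_left sum_distrib_right mult_ac)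
  also have "\<dots> = (\<Sum>i\<in>tuples n. \<Sum>x\<in>X. \<Sum>j\<in>tuples n. cnj (W x j) * \<rho> j i * W x i)"
    by (rule sum.cong[OF refl], rule sum.swap)
  also have "\<dots> = (\<Sum>x\<in>X. \<Sum>i\<in>tuples n. \<Sum>j\<in>tuples n. cnj (W x j) * \<rho> j i * W x i)"
    by (rule sum.swap)
  also have "\<dots> = (\<Sum>x\<in>X. \<Sum>j\<in>tuples n. \<Sum>i\<in>tuples n. cnj (W x j) * \<rho> j i * W x i)"
    by (rule sum.cong[OF refl], rule sum.swap)
  also have "\<dots> = (\<Sum>x\<in>X. qform n \<rho> (W x))"
    unfolding qform_def by simp
  finally show ?thesis .
qed

lemma density_tr_gram:
  fixes W :: "'x \<Rightarrow> ('d::finite) idx \<Rightarrow> complex"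
  assumes "finite X" and "\<And>i j. A i j = (\<Sum>x\<in>X. W x i * cnj (W x j))" and "density_op n \<rho>"
  shows "tr_prod n A \<rho> \<in> \<real>" "0 \<le> Re (tr_prod n A \<rho>)"
proof -
  have q: "\<And>x. qform n \<rho> (W x) \<in> \<real> \<and> 0 \<le> Re (qform n \<rho> (W x))"
    using assms(3) unfolding density_op_def by blast
  show "tr_prod n A \<rho> \<in> \<real>" unfolding tr_prod_gram[OF assms(1,2)]
    using q by (intro sum_in_Reals) auto
  show "0 \<le> Re (tr_prod n A \<rho>)" unfolding tr_prod_gram[OF assms(1,2)] Re_sum
    using q by (intro sum_nonneg) auto
qed



definition idm :: "'d \<Rightarrow> 'd \<Rightarrow> complex" where
  "idm a b = (if a = b then 1 else 0)"

definition Qm :: "('d::finite \<Rightarrow> complex) \<Rightarrow> 'd \<Rightarrow> 'd \<Rightarrow> complex" where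
  "Qm \<psi> a b = idm a b - proj \<psi> a b"

lemma unit_sum: assumes "unit_vec \<psi>" shows "(\<Sum>a\<in>UNIV. \<psi> a * cnj (\<psi> a)) = 1"
proof -
  have "(\<Sum>a\<in>UNIV. \<psi> a * cnj (\<psi> a)) = (\<Sum>a\<in>UNIV. complex_of_real ((cmod (\<psi> a))\<^sup>2))"
    by (rule sum.cong[OF refl], rule complex_norm_square[symmetric])
  also have "\<dots> = complex_of_real (\<Sum>a\<in>UNIV. (cmod (\<psi> a))\<^sup>2)" by simp
  also have "\<dots> = 1" using assms unfolding unit_vec_def by simp
  finally show ?thesis .
qed

lemma pair_add_left: "pair (\<lambda>a b. A a b + c * B a b) C = pair A C + c * pair B C"
  unfolding pair_def by (simp add: algebra_simps sum.distrib sum_distrib_left)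

lemma pair_diff_left: "pair (\<lambda>a b. A a b - B a b) C = pair A C - pair B C"
  unfolding pair_def by (simp add: algebra_simps sum_subtractf)

lemma pair_add_right: "pair C (\<lambda>a b. A a b + c * B a b) = pair C A + c * pair C B"
  unfolding pair_def by (simp add: algebra_simps sum.distrib sum_distrib_left)

lemma pair_diff_right: "pair C (\<lambda>a b. A a b - B a b) = pair C A - pair C B"
  unfolding pair_def by (simp add: algebra_simps sum_subtractf)

lemma pair_scale_right: "pair C (\<lambda>a b. c * B a b) = c * pair C B"
  unfolding pair_def by (simp add: algebra_simps sum_distrib_left)

lemma sum_idm_left: "(\<Sum>x\<in>UNIV. idm a x * g x) = g (a::'d::finite)"
  unfolding idm_def by (simp add: if_distrib[of "\<lambda>z. z * _"] sum.delta cong: if_cong)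

lemma sum_idm_right: "(\<Sum>x\<in>UNIV. g x * idm x a) = g (a::'d::finite)"
  unfolding idm_def by (simp add: if_distrib[of "\<lambda>z. _ * z"] sum.delta' cong: if_cong)

lemma pair_idm_left: "pair idm B = (\<Sum>a\<in>UNIV. B a a)"
  unfolding pair_def sum_idm_left ..

lemma pair_idm_right: "pair A idm = (\<Sum>a\<in>UNIV. A a a)"
  unfolding pair_def by (subst sum.swap) (simp add: mult.commute[of "A _ _"] sum_idm_left)

context
  fixes \<psi> :: "'d::finite \<Rightarrow> complex"
  assumes u: "unit_vec \<psi>"
begin

lemma pair_PP: "pair (proj \<psi>) (proj \<psi>) = 1"
proof -
  have "pair (proj \<psi>) (proj \<psi>) = (\<Sum>a\<in>UNIV. \<psi> a * cnj (\<psi> a)) * (\<Sum>b\<in>UNIV. \<psi> b * cnj (\<psi> b))"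
    unfolding pair_def proj_def sum_product by (simp add: mult_ac)
  then show ?thesis using unit_sum[OF u] by simp
qed

lemma tr_P: "(\<Sum>a\<in>UNIV. proj \<psi> a a) = 1"
  using unit_sum[OF u] unfolding proj_def .

lemma tr_idm: "(\<Sum>a\<in>UNIV. idm (a::'d) a) = of_nat CARD('d)"
  unfolding idm_def by simp

lemma Qm_alt: "Qm \<psi> = (\<lambda>a b. idm a b - proj \<psi> a b)"
  unfolding Qm_def by (intro ext) simp

lemma pair_PQ: "pair (proj \<psi>) (Qm \<psi>) = 0"
proof -
  have "pair (proj \<psi>) (Qm \<psi>) = pair (proj \<psi>) idm - pair (proj \<psi>) (proj \<psi>)"
    unfolding pair_def Qm_def by (simp add: algebra_simps sum_subtractf)
  then show ?thesis unfolding pair_idm_right tr_P pair_PP by simp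
qed

lemma pair_QP: "pair (Qm \<psi>) (proj \<psi>) = 0"
proof -
  have "pair (Qm \<psi>) (proj \<psi>) = pair idm (proj \<psi>) - pair (proj \<psi>) (proj \<psi>)"
    unfolding pair_def Qm_def by (simp add: algebra_simps sum_subtractf)
  then show ?thesis unfolding pair_idm_left tr_P pair_PP by simp
qed

lemma pair_QQ: "pair (Qm \<psi>) (Qm \<psi>) = of_nat CARD('d) - 1"
proof -
  have "pair (Qm \<psi>) C = pair idm C - pair (proj \<psi>) C" for C
    unfolding pair_def Qm_def by (simp add: algebra_simps sum_subtractf)
  then have "pair (Qm \<psi>) (Qm \<psi>) = pair idm (Qm \<psi>) - pair (proj \<psi>) (Qm \<psi>)" .
  then show ?thesis unfolding pair_idm_left pair_PQ by (simp add: Qm_def sum_subtractf tr_idm tr_P)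
qed

lemma pair_IP: "pair idm (proj \<psi>) = 1"
  unfolding pair_idm_left tr_P ..

lemma pair_IQ: "pair idm (Qm \<psi>) = of_nat CARD('d) - 1"
  unfolding pair_idm_left Qm_def by (simp add: sum_subtractf tr_idm tr_P)

lemma Omega_alt: "Omega \<psi> lam = (\<lambda>a b. proj \<psi> a b + complex_of_real lam * Qm \<psi> a b)"
  unfolding Omega_def Qm_def idm_def by (intro ext) simp

lemma pair_OP: "pair (Omega \<psi> lam) (proj \<psi>) = 1"
  unfolding Omega_alt pair_add_left pair_PP pair_QP by simp

lemma pair_OQ: "pair (Omega \<psi> lam) (Qm \<psi>) = complex_of_real lam * (of_nat CARD('d) - 1)"
  unfolding Omega_alt pair_add_left pair_PQ pair_QQ by simp

lemma gram_P: "proj \<psi> a b = (\<Sum>x\<in>(UNIV::'d set). (if x = undefined then \<psi> a else 0) * cnj (if x = undefined then \<psi> b else 0))"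
proof -
  have "(\<Sum>x\<in>(UNIV::'d set). (if x = undefined then \<psi> a else 0) * cnj (if x = undefined then \<psi> b else 0))
     = (\<Sum>x\<in>(UNIV::'d set). if x = undefined then \<psi> a * cnj (\<psi> b) else 0)"
    by (rule sum.cong) auto
  also have "\<dots> = \<psi> a * cnj (\<psi> b)" by (subst sum.delta) auto
  finally show ?thesis unfolding proj_def by simp
qed

lemma Qm_herm: "cnj (Qm \<psi> a b) = Qm \<psi> b a"
  unfolding Qm_def idm_def proj_def by auto

lemma gram_Q: "Qm \<psi> a b = (\<Sum>x\<in>UNIV. Qm \<psi> a x * cnj (Qm \<psi> b x))"
proof -
  have "(\<Sum>x\<in>UNIV. Qm \<psi> a x * cnj (Qm \<psi> b x)) = (\<Sum>x\<in>UNIV. Qm \<psi> a x * Qm \<psi> x b)"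
    by (simp add: Qm_herm)
  also have "\<dots> = (\<Sum>x\<in>UNIV. idm a x * idm x b) - (\<Sum>x\<in>UNIV. idm a x * proj \<psi> x b)
       - (\<Sum>x\<in>UNIV. proj \<psi> a x * idm x b) + \<psi> a * cnj (\<psi> b) * (\<Sum>x\<in>UNIV. \<psi> x * cnj (\<psi> x))"
    unfolding Qm_def proj_def by (simp add: algebra_simps sum.distrib sum_subtractf sum_distrib_left)
  also have "\<dots> = Qm \<psi> a b" unfolding unit_sum[OF u] sum_idm_left sum_idm_right Qm_def proj_def by simp
  finally show ?thesis by simp
qed

end



definition Eop :: "('d::finite \<Rightarrow> complex) \<Rightarrow> nat \<Rightarrow> nat set \<Rightarrow> 'd op" where
  "Eop \<psi> n S = tensor n (\<lambda>k. if k \<in> S then Qm \<psi> else proj \<psi>)"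

lemma tensor_expand:
  fixes \<psi> :: "'d::finite \<Rightarrow> complex"
  shows "tensor n (\<lambda>k a b. proj \<psi> a b + c k * Qm \<psi> a b) i j
     = (\<Sum>S\<in>Pow {..<n}. (\<Prod>k\<in>S. c k) * Eop \<psi> n S i j)"
proof -
  have "tensor n (\<lambda>k a b. proj \<psi> a b + c k * Qm \<psi> a b) i j
      = (\<Prod>k<n. c k * Qm \<psi> (i k) (j k) + proj \<psi> (i k) (j k))"
    unfolding tensor_def by (simp add: add.commute)
  also have "\<dots> = (\<Sum>S\<in>Pow {..<n}. (\<Prod>k\<in>S. c k * Qm \<psi> (i k) (j k)) * (\<Prod>k\<in>{..<n}-S. proj \<psi> (i k) (j k)))"
    by (rule prod_add) simp
  also have "\<dots> = (\<Sum>S\<in>Pow {..<n}. (\<Prod>k\<in>S. c k) * Eop \<psi> n S i j)"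
  proof (rule sum.cong[OF refl])
    fix S assume "S \<in> Pow {..<n}"
    then have S: "S \<subseteq> {..<n}" by auto
    have "Eop \<psi> n S i j = (\<Prod>k\<in>S. Qm \<psi> (i k) (j k)) * (\<Prod>k\<in>{..<n}-S. proj \<psi> (i k) (j k))"
    proof -
      have "Eop \<psi> n S i j = (\<Prod>k<n. if k \<in> S then Qm \<psi> (i k) (j k) else proj \<psi> (i k) (j k))"
        unfolding Eop_def tensor_def by (intro prod.cong) auto
      also have "\<dots> = (\<Prod>k\<in>{..<n} \<inter> {k. k \<in> S}. Qm \<psi> (i k) (j k)) * (\<Prod>k\<in>{..<n} \<inter> - {k. k \<in> S}. proj \<psi> (i k) (j k))"
        by (rule prod.If_cases) simp
      also have "{..<n} \<inter> {k. k \<in> S} = S" using S by auto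
      also have "{..<n} \<inter> - {k. k \<in> S} = {..<n} - S" by auto
      finally show ?thesis .
    qed
    then show "(\<Prod>k\<in>S. c k * Qm \<psi> (i k) (j k)) * (\<Prod>k\<in>{..<n}-S. proj \<psi> (i k) (j k))
        = (\<Prod>k\<in>S. c k) * Eop \<psi> n S i j"
      by (simp add: prod.distrib)
  qed
  finally show ?thesis .
qed

lemma omega_tensor_alt:
  "omega_tensor N \<psi> lam X i j = tensor (Suc N) (\<lambda>k. if k < N then Omega \<psi> lam else X) i j"
  unfolding omega_tensor_def tensor_def by (simp add: prod.lessThan_Suc)

lemma tr_prod_lin:
  assumes "finite A"
  shows "tr_prod n (\<lambda>i j. \<Sum>S\<in>A. \<alpha> S * B S i j) \<rho> = (\<Sum>S\<in>A. \<alpha> S * tr_prod n (B S) \<rho>)"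
proof -
  have "tr_prod n (\<lambda>i j. \<Sum>S\<in>A. \<alpha> S * B S i j) \<rho>
      = (\<Sum>i\<in>tuples n. \<Sum>j\<in>tuples n. \<Sum>S\<in>A. \<alpha> S * (B S i j * \<rho> j i))"
    unfolding tr_prod_def by (simp add: sum_distrib_right mult.assoc)
  also have "\<dots> = (\<Sum>i\<in>tuples n. \<Sum>S\<in>A. \<Sum>j\<in>tuples n. \<alpha> S * (B S i j * \<rho> j i))"
    by (rule sum.cong[OF refl], rule sum.swap)
  also have "\<dots> = (\<Sum>S\<in>A. \<Sum>i\<in>tuples n. \<Sum>j\<in>tuples n. \<alpha> S * (B S i j * \<rho> j i))"
    by (rule sum.swap)
  also have "\<dots> = (\<Sum>S\<in>A. \<alpha> S * tr_prod n (B S) \<rho>)"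
    unfolding tr_prod_def by (simp add: sum_distrib_left)
  finally show ?thesis .
qed

lemma tr_prod_cong:
  assumes "\<And>i j. i \<in> tuples n \<Longrightarrow> j \<in> tuples n \<Longrightarrow> A i j = B i j"
  shows "tr_prod n A \<rho> = tr_prod n B \<rho>"
  unfolding tr_prod_def using assms by (intro sum.cong refl) auto

lemma tensor_idm:
  assumes "i \<in> tuples n" "j \<in> tuples n"
  shows "tensor n (\<lambda>k. idm) i j = (if i = j then 1 else 0)"
proof (cases "i = j")
  case True then show ?thesis unfolding tensor_def idm_def by simp
next
  case False
  then obtain k where k: "i k \<noteq> j k" by auto
  have "k < n"
  proof (rule ccontr)
    assume "\<not> k < n"
    then have "i k = undefined" "j k = undefined" using assms unfolding tuples_def
      by (auto simp: PiE_def extensional_def)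
    then show False using k by simp
  qed
  then have "(\<Prod>k<n. idm (i k) (j k)) = 0"
    using k by (intro prod_zero) (auto simp: idm_def intro!: bexI[of _ k])
  then show ?thesis using False unfolding tensor_def by simp
qed

lemma tr_prod_id:
  "tr_prod n (tensor n (\<lambda>k. idm)) \<rho> = trace_op n \<rho>"
proof -
  have "tr_prod n (tensor n (\<lambda>k. idm)) \<rho> = tr_prod n (\<lambda>i j. if i = j then 1 else 0) \<rho>"
    by (rule tr_prod_cong) (simp add: tensor_idm)
  also have "\<dots> = trace_op n \<rho>"
    unfolding tr_prod_def trace_op_def
    by (simp add: if_distrib[of "\<lambda>z. z * _"] sum.delta cong: if_cong)
  finally show ?thesis .
qed

lemma tuples_reindex:
  fixes g :: "('d::finite) idx \<Rightarrow> 'b::comm_monoid_add"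
  assumes "\<sigma> permutes {..<n}"
  shows "(\<Sum>i\<in>tuples n. g i) = (\<Sum>i\<in>tuples n. g (i \<circ> \<sigma>))"
proof -
  have c1: "a \<circ> inv \<sigma> \<circ> \<sigma> = a" for a :: "'d idx"
    using permutes_inverses(2)[OF assms] by (auto simp: fun_eq_iff)
  have c2: "a \<circ> \<sigma> \<circ> inv \<sigma> = a" for a :: "'d idx"
    using permutes_inverses(1)[OF assms] by (auto simp: fun_eq_iff)
  have t1: "a \<circ> \<sigma> \<in> tuples n" if "a \<in> tuples n" for a :: "'d idx"
    using that permutes_not_in[OF assms] unfolding tuples_def by (auto simp: PiE_def extensional_def)
  have t2: "a \<circ> inv \<sigma> \<in> tuples n" if "a \<in> tuples n" for a :: "'d idx"
    using that permutes_not_in[OF permutes_inv[OF assms]] unfolding tuples_def by (auto simp: PiE_def extensional_def)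
  show ?thesis
    by (rule sum.reindex_bij_witness[where i="\<lambda>i. i \<circ> \<sigma>" and j="\<lambda>i. i \<circ> inv \<sigma>"])
       (auto simp: c1 c2 t1 t2)
qed

lemma tr_perm:
  assumes "perm_invariant n \<rho>" "\<sigma> permutes {..<n}"
  shows "tr_prod n A \<rho> = tr_prod n (\<lambda>i j. A (i \<circ> \<sigma>) (j \<circ> \<sigma>)) \<rho>"
proof -
  have "tr_prod n A \<rho> = (\<Sum>i\<in>tuples n. \<Sum>j\<in>tuples n. A (i \<circ> \<sigma>) (j \<circ> \<sigma>) * \<rho> (j \<circ> \<sigma>) (i \<circ> \<sigma>))"
    unfolding tr_prod_def
    by (subst tuples_reindex[OF assms(2)], rule sum.cong[OF refl], subst tuples_reindex[OF assms(2)], rule refl)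
  also have "\<dots> = tr_prod n (\<lambda>i j. A (i \<circ> \<sigma>) (j \<circ> \<sigma>)) \<rho>"
    unfolding tr_prod_def using assms(1,2) unfolding perm_invariant_def by (intro sum.cong refl) auto
  finally show ?thesis .
qed

lemma tensor_perm:
  assumes "\<sigma> permutes {..<n}" "\<And>k. \<tau> (\<sigma> k) = k"
  shows "tensor n F (i \<circ> \<sigma>) (j \<circ> \<sigma>) = tensor n (\<lambda>k. F (\<tau> k)) i j"
proof -
  have "tensor n F (i \<circ> \<sigma>) (j \<circ> \<sigma>) = prod ((\<lambda>k. F (\<tau> k) (i k) (j k)) \<circ> \<sigma>) {..<n}"
    unfolding tensor_def using assms(2) by (intro prod.cong) auto
  also have "\<dots> = tensor n (\<lambda>k. F (\<tau> k)) i j"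
    unfolding tensor_def by (rule prod.permute[OF assms(1), symmetric])
  finally show ?thesis .
qed

lemma Eop_swap:
  assumes "perm_invariant n \<rho>" "x < n" "y < n"
  shows "tr_prod n (Eop \<psi> n S) \<rho> = tr_prod n (Eop \<psi> n (Transposition.transpose x y ` S)) \<rho>"
proof -
  let ?t = "Transposition.transpose x y"
  have p: "?t permutes {..<n}" using assms by (intro permutes_swap_id) auto
  have "tr_prod n (Eop \<psi> n S) \<rho> = tr_prod n (\<lambda>i j. Eop \<psi> n S (i \<circ> ?t) (j \<circ> ?t)) \<rho>"
    by (rule tr_perm[OF assms(1) p])
  also have "\<dots> = tr_prod n (Eop \<psi> n (?t ` S)) \<rho>"
    unfolding Eop_def tensor_perm[OF p transpose_involutory]
    by (simp add: in_transpose_image_iff)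
  finally show ?thesis .
qed



definition Tset :: "nat \<Rightarrow> nat \<Rightarrow> nat set set" where
  "Tset n m = {S. S \<subseteq> {..<n} \<and> card S = m}"

lemma finite_Tset[simp]: "finite (Tset n m)"
  unfolding Tset_def by (rule finite_subset[of _ "Pow {..<n}"]) auto

lemma Tset_nonempty: "m \<le> n \<Longrightarrow> {..<m} \<in> Tset n m"
  unfolding Tset_def by auto

lemma count_lemma:
  fixes w :: "nat set \<Rightarrow> real"
  assumes "N < n"
    and inv: "\<And>x S. x < n \<Longrightarrow> S \<subseteq> {..<n} \<Longrightarrow> w (Transposition.transpose x N ` S) = w S"
  shows "real n * (\<Sum>S\<in>Tset n m. if N \<in> S then w S else 0) = real m * (\<Sum>S\<in>Tset n m. w S)"
proof -
  have per_x: "(\<Sum>S\<in>Tset n m. if x \<in> S then w S else 0) = (\<Sum>S\<in>Tset n m. if N \<in> S then w S else 0)"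
    if x: "x < n" for x
  proof -
    let ?t = "Transposition.transpose x N"
    have inT: "?t ` S \<in> Tset n m" if "S \<in> Tset n m" for S
    proof -
      have "?t ` S \<subseteq> {..<n}" using that x assms(1) unfolding Tset_def
        by (auto simp: Transposition.transpose_def)
      moreover have "card (?t ` S) = card S" by (rule card_image) simp
      ultimately show ?thesis using that unfolding Tset_def by auto
    qed
    have invol: "?t ` ?t ` S = S" for S by (simp add: image_image)
    show ?thesis
    proof (rule sum.reindex_bij_witness[where i="\<lambda>S. ?t ` S" and j="\<lambda>S. ?t ` S"])
      fix S assume S: "S \<in> Tset n m"
      show "?t ` ?t ` S = S" by (rule invol)
      show "?t ` S \<in> Tset n m" by (rule inT[OF S])
      have "N \<in> ?t ` S \<longleftrightarrow> x \<in> S" by (simp add: in_transpose_image_iff)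
      moreover have "w (?t ` S) = w S" using S x unfolding Tset_def by (intro inv) auto
      ultimately show "(if N \<in> ?t ` S then w (?t ` S) else 0) = (if x \<in> S then w S else 0)" by simp
    qed (simp_all add: invol inT)
  qed
  have "real m * (\<Sum>S\<in>Tset n m. w S) = (\<Sum>S\<in>Tset n m. real (card S) * w S)"
    by (simp add: sum_distrib_left Tset_def)
  also have "\<dots> = (\<Sum>S\<in>Tset n m. \<Sum>x<n. if x \<in> S then w S else 0)"
  proof (rule sum.cong[OF refl])
    fix S assume "S \<in> Tset n m"
    then have S: "S \<subseteq> {..<n}" unfolding Tset_def by auto
    have "(\<Sum>x<n. if x \<in> S then w S else 0) = (\<Sum>x\<in>{..<n} \<inter> S. w S)"
      by (simp add: sum.inter_restrict[symmetric] indicator_def if_distrib[of "\<lambda>z. z * _"] cong: if_cong)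
    also have "\<dots> = real (card S) * w S" using Int_absorb1[OF S] by simp
    finally show "real (card S) * w S = (\<Sum>x<n. if x \<in> S then w S else 0)" by simp
  qed
  also have "\<dots> = (\<Sum>x<n. \<Sum>S\<in>Tset n m. if x \<in> S then w S else 0)"
    by (rule sum.swap)
  also have "\<dots> = (\<Sum>x<n. \<Sum>S\<in>Tset n m. if N \<in> S then w S else 0)"
    by (rule sum.cong[OF refl]) (simp add: per_x)
  also have "\<dots> = real n * (\<Sum>S\<in>Tset n m. if N \<in> S then w S else 0)" by simp
  finally show ?thesis by simp
qed

lemma group_card:
  fixes g :: "nat set \<Rightarrow> real"
  shows "(\<Sum>S\<in>Pow {..<n}. g S) = (\<Sum>m\<le>n. \<Sum>S\<in>Tset n m. g S)"
proof -
  have "(\<Sum>m\<le>n. \<Sum>S\<in>{S \<in> Pow {..<n}. card S = m}. g S) = (\<Sum>S\<in>Pow {..<n}. g S)"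
    by (rule sum.group) (auto intro: card_mono[of "{..<n}", simplified])
  moreover have "{S \<in> Pow {..<n}. card S = m} = Tset n m" for m unfolding Tset_def by auto
  ultimately show ?thesis by simp
qed

definition pm :: "nat \<Rightarrow> real \<Rightarrow> nat \<Rightarrow> real" where
  "pm n lam m = (real m * lam ^ (m - 1) + (real n - real m) * lam ^ m) / real n"

definition fm :: "nat \<Rightarrow> real \<Rightarrow> nat \<Rightarrow> real" where
  "fm n lam m = (real n - real m) * lam ^ m / real n"

lemma aggregate:
  fixes w :: "nat set \<Rightarrow> real"
  assumes n: "n = Suc N"
    and inv: "\<And>x S. x < n \<Longrightarrow> S \<subseteq> {..<n} \<Longrightarrow> w (Transposition.transpose x N ` S) = w S"
  shows "(\<Sum>S\<in>Pow {..<n}. lam ^ card (S - {N}) * w S) = (\<Sum>m\<le>n. (\<Sum>S\<in>Tset n m. w S) * pm n lam m)"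
    and "(\<Sum>S\<in>Pow {..<n}. (if N \<in> S then 0 else lam ^ card S) * w S) = (\<Sum>m\<le>n. (\<Sum>S\<in>Tset n m. w S) * fm n lam m)"
proof -
  have NN: "N < n" using n by simp
  have n0: "real n \<noteq> 0" using n by simp
  define A where "A m = (\<Sum>S\<in>Tset n m. w S)" for m
  define B where "B m = (\<Sum>S\<in>Tset n m. if N \<in> S then w S else 0)" for m
  have AB: "real n * B m = real m * A m" for m
    unfolding A_def B_def by (rule count_lemma[OF NN inv])
  have 1: "(\<Sum>S\<in>Tset n m. lam ^ card (S - {N}) * w S) = A m * pm n lam m" for m
  proof -
    have "(\<Sum>S\<in>Tset n m. lam ^ card (S - {N}) * w S)
        = (\<Sum>S\<in>Tset n m. lam ^ (m - 1) * (if N \<in> S then w S else 0) + lam ^ m * (w S - (if N \<in> S then w S else 0)))"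
      by (rule sum.cong[OF refl]) (auto simp: Tset_def card_Diff_singleton)
    also have "\<dots> = lam ^ (m - 1) * B m + lam ^ m * (A m - B m)"
      unfolding A_def B_def sum.distrib sum_distrib_left[symmetric] by (simp only: sum_subtractf)
    also have "\<dots> = (lam ^ (m - 1) * (real n * B m) + lam ^ m * (real n * A m - real n * B m)) / real n"
      using n0 by (simp add: field_simps)
    also have "\<dots> = (lam ^ (m - 1) * (real m * A m) + lam ^ m * (real n * A m - real m * A m)) / real n"
      unfolding AB ..
    also have "\<dots> = A m * pm n lam m"
      unfolding pm_def by (simp add: field_simps)
    finally show ?thesis .
  qed
  have 2: "(\<Sum>S\<in>Tset n m. (if N \<in> S then 0 else lam ^ card S) * w S) = A m * fm n lam m" for m
  proof -
    have "(\<Sum>S\<in>Tset n m. (if N \<in> S then 0 else lam ^ card S) * w S)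
        = (\<Sum>S\<in>Tset n m. lam ^ m * (w S - (if N \<in> S then w S else 0)))"
      by (rule sum.cong[OF refl]) (auto simp: Tset_def)
    also have "\<dots> = lam ^ m * (A m - B m)"
      unfolding A_def B_def sum_distrib_left[symmetric] by (rule arg_cong[where f="(*) _"], rule sum_subtractf)
    also have "\<dots> = lam ^ m * (real n * A m - real n * B m) / real n"
      using n0 by (simp add: field_simps)
    also have "\<dots> = lam ^ m * (real n * A m - real m * A m) / real n"
      unfolding AB ..
    also have "\<dots> = A m * fm n lam m"
      unfolding fm_def by (simp add: field_simps)
    finally show ?thesis .
  qed
  show "(\<Sum>S\<in>Pow {..<n}. lam ^ card (S - {N}) * w S) = (\<Sum>m\<le>n. (\<Sum>S\<in>Tset n m. w S) * pm n lam m)"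
    unfolding group_card using 1 unfolding A_def by simp
  show "(\<Sum>S\<in>Pow {..<n}. (if N \<in> S then 0 else lam ^ card S) * w S) = (\<Sum>m\<le>n. (\<Sum>S\<in>Tset n m. w S) * fm n lam m)"
    unfolding group_card using 2 unfolding A_def by simp
qed



lemma K_nonneg:
  fixes lam :: real
  assumes "0 < lam" "lam < 1"
  shows "0 \<le> lam ^ m * ((1 - lam) * (real k - real m) - lam) + lam ^ (k + 1)"
proof (cases "k + 1 \<le> m")
  case True
  then obtain t where m: "m = k + 1 + t" by (intro that[of "m - (k + 1)"]) simp
  have b: "1 + real t * (1 / lam - 1) \<le> (1 + (1 / lam - 1)) ^ t"
    by (rule Bernoulli_inequality) (use assms in \<open>simp add: field_simps\<close>)
  have "(1 - lam) / 1 \<le> (1 - lam) / lam" by (rule divide_left_mono) (use assms in auto)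
  moreover have "1 / lam - 1 = (1 - lam) / lam" using assms by (simp add: field_simps)
  ultimately have "1 - lam \<le> 1 / lam - 1" by simp
  then have "1 + real t * (1 - lam) \<le> 1 + real t * (1 / lam - 1)" by (simp add: mult_left_mono)
  also have "\<dots> \<le> (1 / lam) ^ t" using b by simp
  finally have "lam ^ t * (1 + real t * (1 - lam)) \<le> lam ^ t * (1 / lam) ^ t"
    using assms by (simp add: mult_left_mono)
  also have "\<dots> = 1" using assms by (simp add: power_one_over[symmetric] power_mult_distrib[symmetric])
  finally have c: "lam ^ t * (1 + real t * (1 - lam)) \<le> 1" .
  have "lam ^ m * ((1 - lam) * (real k - real m) - lam) + lam ^ (k + 1)
      = lam ^ (k + 1) * (1 - lam ^ t * (1 + real t * (1 - lam)))"
    unfolding m by (simp add: power_add field_simps)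
  moreover have "0 \<le> lam ^ (k + 1) * (1 - lam ^ t * (1 + real t * (1 - lam)))"
    using c assms by (intro mult_nonneg_nonneg) auto
  ultimately show ?thesis by simp
next
  case False
  then obtain s where k: "k = m + s" by (intro that[of "k - m"]) simp
  have b: "1 + real s * (lam - 1) \<le> (1 + (lam - 1)) ^ s"
    by (rule Bernoulli_inequality) (use assms in simp)
  then have "lam * (1 + real s * (lam - 1)) \<le> lam * lam ^ s" using assms by (simp add: mult_left_mono)
  moreover have "lam * (real s * (1 - lam)) \<le> real s * (1 - lam)" using assms
    by (simp add: mult_left_le_one_le mult_nonneg_nonneg)
  ultimately have c: "0 \<le> (1 - lam) * real s - lam + lam ^ (s + 1)" by (simp add: algebra_simps)
  have "lam ^ m * ((1 - lam) * (real k - real m) - lam) + lam ^ (k + 1)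
      = lam ^ m * ((1 - lam) * real s - lam + lam ^ (s + 1))"
    unfolding k by (simp add: power_add field_simps)
  moreover have "0 \<le> lam ^ m * ((1 - lam) * real s - lam + lam ^ (s + 1))"
    using c assms by simp
  ultimately show ?thesis by simp
qed

lemma poly_id:
  fixes l x y k N j a :: real
  assumes "(N + 1) * a = 1"
  shows "(1 - l) * ((k + (N - k) * l) * ((N - j) * l * x * a) - (N - k) * l * (((j + 1) * x + (N - j) * l * x) * a)) - l * (((j + 1) * x + (N - j) * l * x) * a - y) = l * x * ((1 - l) * (k - (j+1)) - l) + l * y"
proof -
  have "(1 - l) * ((k + (N - k) * l) * ((N - j) * l * x * a) - (N - k) * l * (((j + 1) * x + (N - j) * l * x) * a)) - l * (((j + 1) * x + (N - j) * l * x) * a - y)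
     = ((N + 1) * a) * (l * x * ((1 - l) * (k - (j+1)) - l)) + l * y"
    by (simp add: algebra_simps)
  then show ?thesis using assms by simp
qed

lemma per_m_identity:
  fixes lam :: real
  assumes n: "n = Suc N" and "0 < lam"
  shows "(1 - lam) * ((real k + (real N - real k) * lam) * fm n lam m - (real N - real k) * lam * pm n lam m)
           - lam * (pm n lam m - lam ^ k)
         = lam ^ m * ((1 - lam) * (real k - real m) - lam) + lam ^ (k + 1)"
proof (cases m)
  case 0
  then have "pm n lam m = 1" "fm n lam m = 1" using n unfolding pm_def fm_def by auto
  then show ?thesis using 0 by (simp add: algebra_simps)
next
  case (Suc j)
  have a: "(real N + 1) * (1 / (real N + 1)) = 1" by simp
  have pm: "pm n lam m = ((real j + 1) * lam ^ j + (real N - real j) * lam * lam ^ j) * (1 / (real N + 1))"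
    unfolding pm_def using n Suc by (simp add: divide_inverse algebra_simps)
  have fm: "fm n lam m = (real N - real j) * lam * lam ^ j * (1 / (real N + 1))"
    unfolding fm_def using n Suc by (simp add: divide_inverse algebra_simps)
  have "lam ^ m = lam * lam ^ j" "lam ^ (k + 1) = lam * lam ^ k" "real m = real j + 1" using Suc by auto
  then show ?thesis unfolding pm fm by (simp only: poly_id[OF a])
qed



lemma LP_lower:
  fixes lam :: real and A :: "nat \<Rightarrow> real"
  assumes n: "n = Suc N" and k: "k \<le> N" and l: "0 < lam" "lam < 1"
    and A0: "\<And>m. 0 \<le> A m" and A1: "(\<Sum>m\<le>n. A m) = 1"
    and p: "lam ^ k \<le> (\<Sum>m\<le>n. A m * pm n lam m)"
  shows "(real N - real k) * lam * (\<Sum>m\<le>n. A m * pm n lam m)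
           \<le> (real k + (real N - real k) * lam) * (\<Sum>m\<le>n. A m * fm n lam m)"
proof -
  let ?D = "real k + (real N - real k) * lam"
  let ?P = "\<Sum>m\<le>n. A m * pm n lam m"
  let ?F = "\<Sum>m\<le>n. A m * fm n lam m"
  have "0 \<le> (\<Sum>m\<le>n. A m * (lam ^ m * ((1 - lam) * (real k - real m) - lam) + lam ^ (k + 1)))"
    using A0 K_nonneg[OF l] by (intro sum_nonneg mult_nonneg_nonneg) auto
  also have "\<dots> = (\<Sum>m\<le>n. A m * ((1 - lam) * (?D * fm n lam m - (real N - real k) * lam * pm n lam m)
           - lam * (pm n lam m - lam ^ k)))"
    by (simp only: per_m_identity[OF n l(1)])
  also have "\<dots> = (1 - lam) * (?D * ?F - (real N - real k) * lam * ?P) - lam * (?P - lam ^ k * (\<Sum>m\<le>n. A m))"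
    by (simp add: algebra_simps sum_distrib_left sum_distrib_right sum.distrib sum_subtractf)
  finally have "lam * (?P - lam ^ k) \<le> (1 - lam) * (?D * ?F - (real N - real k) * lam * ?P)"
    using A1 by simp
  moreover have "0 \<le> lam * (?P - lam ^ k)" using p l by simp
  ultimately have "0 \<le> (1 - lam) * (?D * ?F - (real N - real k) * lam * ?P)" by linarith
  then have "0 \<le> ?D * ?F - (real N - real k) * lam * ?P" using l
    by (simp add: zero_le_mult_iff)
  then show ?thesis by simp
qed

lemma sum_two_point:
  fixes g :: "nat \<Rightarrow> real"
  assumes "Suc k \<le> n"
  shows "(\<Sum>m\<le>n. (if m = k then t else if m = Suc k then 1 - t else 0) * g m) = t * g k + (1 - t) * g (Suc k)"
proof -
  have "(\<Sum>m\<le>n. (if m = k then t else if m = Suc k then 1 - t else 0) * g m)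
      = (\<Sum>m\<le>n. (if m = k then t * g k else 0) + (if m = Suc k then (1 - t) * g (Suc k) else 0))"
    by (rule sum.cong) auto
  also have "\<dots> = t * g k + (1 - t) * g (Suc k)"
    using assms by (simp add: sum.distrib)
  finally show ?thesis .
qed

lemma up_poly1:
  fixes l y a e K N :: real
  shows "((N - K) * l * e) * ((K * y + (N + 1 - K) * (l * y)) * a) + (K * e) * (((K + 1) * (l * y) + (N + 1 - K - 1) * l * (l * y)) * a)
    = (e * (K + (N - K) * l)) * (a * (N + 1)) * (l * y)"
  by (simp add: algebra_simps)

lemma up_poly2:
  fixes l x a e K N :: real
  shows "((N - K) * l * e) * ((N + 1 - K) * x * a) + (K * e) * ((N + 1 - K - 1) * (l * x) * a)
    = ((N - K) * l * e) * x * (a * (N + 1))"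
  by (simp add: algebra_simps)

lemma LP_upper:
  fixes lam :: real
  assumes n: "n = Suc N" and k: "k \<le> N" and l: "0 < lam" "lam < 1" and D: "0 < real k + (real N - real k) * lam"
  defines "t \<equiv> (real N - real k) * lam / (real k + (real N - real k) * lam)"
  shows "t * pm n lam k + (1 - t) * pm n lam (Suc k) = lam ^ k"
    and "t * fm n lam k + (1 - t) * fm n lam (Suc k) = t * lam ^ k"
proof -
  let ?D = "real k + (real N - real k) * lam"
  define a where "a = inverse (real n)"
  define e where "e = inverse ?D"
  have a1: "a * (real N + 1) = 1" unfolding a_def using n by (simp add: add.commute)
  have e1: "e * ?D = 1" unfolding e_def using D by simp
  have tt: "t = (real N - real k) * lam * e" unfolding t_def e_def by (simp add: divide_inverse)
  have t1: "1 - t = real k * e" unfolding tt using e1 by (simp add: algebra_simps)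
  have pmk: "pm n lam k = (real k * lam ^ (k - 1) + (real N + 1 - real k) * lam ^ k) * a"
    unfolding pm_def a_def using n by (simp add: divide_inverse)
  have pmk1: "pm n lam (Suc k) = ((real k + 1) * lam ^ k + (real N + 1 - real k - 1) * lam * lam ^ k) * a"
    unfolding pm_def a_def using n by (simp add: divide_inverse algebra_simps)
  have fmk: "fm n lam k = (real N + 1 - real k) * lam ^ k * a"
    unfolding fm_def a_def using n by (simp add: divide_inverse)
  have fmk1: "fm n lam (Suc k) = (real N + 1 - real k - 1) * (lam * lam ^ k) * a"
    unfolding fm_def a_def using n by (simp add: divide_inverse algebra_simps)
  show "t * pm n lam k + (1 - t) * pm n lam (Suc k) = lam ^ k"
  proof (cases k)
    case 0
    have pos: "0 < real N * lam" using 0 D by simp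
    then have "real N * lam \<noteq> 0" by linarith
    then have "t = 1" unfolding t_def using 0 by simp
    moreover have "pm n lam 0 = 1" unfolding pm_def using n by simp
    ultimately show ?thesis using 0 by simp
  next
    case (Suc j)
    have "t * pm n lam k + (1 - t) * pm n lam (Suc k) = (e * ?D) * (a * (real N + 1)) * (lam * lam ^ j)"
    proof -
      have e2: "lam ^ (k - 1) = lam ^ j" "lam ^ k = lam * lam ^ j" using Suc by auto
      show ?thesis unfolding t1 unfolding tt pmk pmk1 e2 by (rule up_poly1)
    qed
    then show ?thesis using Suc a1 e1 by simp
  qed
  have "t * fm n lam k + (1 - t) * fm n lam (Suc k) = ((real N - real k) * lam * e) * lam ^ k * (a * (real N + 1))"
    unfolding t1 unfolding tt fmk fmk1 by (rule up_poly2)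
  then show "t * fm n lam k + (1 - t) * fm n lam (Suc k) = t * lam ^ k"
    unfolding tt using a1 by simp
qed



lemma idm_eq: "(\<lambda>a b. if a = b then 1 else 0) = idm"
  unfolding idm_def by (intro ext) simp

lemma prod_c1:
  assumes "S \<subseteq> {..<Suc N}"
  shows "(\<Prod>k\<in>S. if k < N then complex_of_real lam else 1) = complex_of_real (lam ^ card (S - {N}))"
proof -
  have fin: "finite S" using assms finite_subset by blast
  have "(\<Prod>k\<in>S. if k < N then complex_of_real lam else 1)
      = (\<Prod>k\<in>S \<inter> {k. k < N}. complex_of_real lam) * (\<Prod>k\<in>S \<inter> - {k. k < N}. 1)"
    by (rule prod.If_cases[OF fin])
  also have "S \<inter> {k. k < N} = S - {N}" using assms by auto
  finally show ?thesis by simp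
qed

lemma prod_c2:
  assumes "S \<subseteq> {..<Suc N}"
  shows "(\<Prod>k\<in>S. if k < N then complex_of_real lam else 0) = complex_of_real (if N \<in> S then 0 else lam ^ card S)"
proof (cases "N \<in> S")
  case True
  have fin: "finite S" using assms finite_subset by blast
  have "(\<Prod>k\<in>S. if k < N then complex_of_real lam else 0) = 0"
    using True by (intro prod_zero[OF fin]) (auto intro!: bexI[of _ N])
  then show ?thesis using True by simp
next
  case False
  have "k < N" if "k \<in> S" for k
  proof -
    have "k < Suc N" using that assms by auto
    moreover have "k \<noteq> N" using that False by auto
    ultimately show ?thesis by simp
  qed
  then have "(\<Prod>k\<in>S. if k < N then complex_of_real lam else 0) = (\<Prod>k\<in>S. complex_of_real lam)"
    by (intro prod.cong) auto
  then show ?thesis using False by simp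
qed

context
  fixes \<psi> :: "'d::finite \<Rightarrow> complex"
  assumes u: "unit_vec \<psi>"
begin

lemma tr_expand:
  shows "tr_prod n (tensor n (\<lambda>k a b. proj \<psi> a b + c k * Qm \<psi> a b)) \<rho>
     = (\<Sum>S\<in>Pow {..<n}. (\<Prod>k\<in>S. c k) * tr_prod n (Eop \<psi> n S) \<rho>)"
proof -
  have "tensor n (\<lambda>k a b. proj \<psi> a b + c k * Qm \<psi> a b) = (\<lambda>i j. \<Sum>S\<in>Pow {..<n}. (\<Prod>k\<in>S. c k) * Eop \<psi> n S i j)"
    by (intro ext) (rule tensor_expand)
  then show ?thesis by (simp add: tr_prod_lin)
qed

lemma Eop_nonneg:
  assumes "density_op n \<rho>"
  shows "0 \<le> Re (tr_prod n (Eop \<psi> n S) \<rho>)"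
proof -
  define U where "U k = (if k \<in> S then (\<lambda>x a. Qm \<psi> a x) else (\<lambda>x a. if x = undefined then \<psi> a else 0))" for k
  have g: "(if k \<in> S then Qm \<psi> else proj \<psi>) a b = (\<Sum>x\<in>UNIV. U k x a * cnj (U k x b))" for k a b
  proof (cases "k \<in> S")
    case True
    then have "(if k \<in> S then Qm \<psi> else proj \<psi>) a b = Qm \<psi> a b" by simp
    also have "\<dots> = (\<Sum>x\<in>UNIV. Qm \<psi> a x * cnj (Qm \<psi> b x))" by (rule gram_Q[OF u])
    also have "\<dots> = (\<Sum>x\<in>UNIV. U k x a * cnj (U k x b))" unfolding U_def using True by simp
    finally show ?thesis .
  next
    case False
    then have "(if k \<in> S then Qm \<psi> else proj \<psi>) a b = proj \<psi> a b" by simp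
    also have "\<dots> = (\<Sum>x\<in>(UNIV::'d set). (if x = undefined then \<psi> a else 0) * cnj (if x = undefined then \<psi> b else 0))"
      by (rule gram_P[OF u])
    also have "\<dots> = (\<Sum>x\<in>UNIV. U k x a * cnj (U k x b))" unfolding U_def using False by simp
    finally show ?thesis .
  qed
  have tg: "Eop \<psi> n S i j = (\<Sum>x\<in>tuples n. (\<Prod>k<n. U k (x k) (i k)) * cnj (\<Prod>k<n. U k (x k) (j k)))" for i j
    unfolding Eop_def by (rule tensor_gram) (rule g)
  show ?thesis
    by (rule density_tr_gram(2)[where W="\<lambda>x i. \<Prod>k<n. U k (x k) (i k)", OF finite_tuples tg assms])
qed

lemma lower_rho:
  assumes n: "n = Suc N" and k: "k \<le> N" and l: "0 < lam" "lam < 1"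
    and dens: "density_op n \<rho>" and pinv: "perm_invariant n \<rho>"
    and p: "lam ^ k \<le> p_val N \<psi> lam \<rho>"
  shows "(real N - real k) * lam * p_val N \<psi> lam \<rho> \<le> (real k + (real N - real k) * lam) * f_val N \<psi> lam \<rho>"
proof -
  define w where "w S = Re (tr_prod n (Eop \<psi> n S) \<rho>)" for S
  have NN: "N < n" using n by simp
  have winv: "w (Transposition.transpose x N ` S) = w S" if "x < n" "S \<subseteq> {..<n}" for x S
    unfolding w_def by (rule arg_cong[where f=Re], rule Eop_swap[OF pinv that(1) NN, symmetric])
  have w0: "0 \<le> w S" for S unfolding w_def by (rule Eop_nonneg[OF dens])
  have ReS: "Re (\<Sum>S\<in>Pow {..<n}. complex_of_real (r S) * tr_prod n (Eop \<psi> n S) \<rho>) = (\<Sum>S\<in>Pow {..<n}. r S * w S)" for r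
    unfolding w_def by (simp add: Re_sum)
  have pv: "p_val N \<psi> lam \<rho> = (\<Sum>S\<in>Pow {..<n}. lam ^ card (S - {N}) * w S)"
  proof -
    have "p_val N \<psi> lam \<rho> = Re (tr_prod n (tensor n (\<lambda>k. if k < N then Omega \<psi> lam else idm)) \<rho>)"
      unfolding p_val_def idm_eq n omega_tensor_alt[abs_def] by simp
    also have "\<dots> = Re (\<Sum>S\<in>Pow {..<n}. (\<Prod>k\<in>S. if k < N then complex_of_real lam else 1) * tr_prod n (Eop \<psi> n S) \<rho>)"
    proof -
      have eq: "(\<lambda>k. if k < N then Omega \<psi> lam else idm) = (\<lambda>k a b. proj \<psi> a b + (if k < N then complex_of_real lam else 1) * Qm \<psi> a b)"
        by (intro ext) (simp add: Omega_alt[OF u] Qm_def)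
      then show ?thesis by (subst eq) (rule arg_cong[where f=Re], rule tr_expand)
    qed
    also have "\<dots> = Re (\<Sum>S\<in>Pow {..<n}. complex_of_real (lam ^ card (S - {N})) * tr_prod n (Eop \<psi> n S) \<rho>)"
      using prod_c1[of _ N lam] n by (intro arg_cong[where f=Re] sum.cong) auto
    finally show ?thesis unfolding ReS .
  qed
  have fv: "f_val N \<psi> lam \<rho> = (\<Sum>S\<in>Pow {..<n}. (if N \<in> S then 0 else lam ^ card S) * w S)"
  proof -
    have "f_val N \<psi> lam \<rho> = Re (tr_prod n (tensor n (\<lambda>k. if k < N then Omega \<psi> lam else proj \<psi>)) \<rho>)"
      unfolding f_val_def n omega_tensor_alt[abs_def] by simp
    also have "\<dots> = Re (\<Sum>S\<in>Pow {..<n}. (\<Prod>k\<in>S. if k < N then complex_of_real lam else 0) * tr_prod n (Eop \<psi> n S) \<rho>)"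
    proof -
      have eq: "(\<lambda>k. if k < N then Omega \<psi> lam else proj \<psi>) = (\<lambda>k a b. proj \<psi> a b + (if k < N then complex_of_real lam else 0) * Qm \<psi> a b)"
        by (intro ext) (simp add: Omega_alt[OF u])
      then show ?thesis by (subst eq) (rule arg_cong[where f=Re], rule tr_expand)
    qed
    also have "\<dots> = Re (\<Sum>S\<in>Pow {..<n}. complex_of_real (if N \<in> S then 0 else lam ^ card S) * tr_prod n (Eop \<psi> n S) \<rho>)"
      using prod_c2[of _ N lam] n by (intro arg_cong[where f=Re] sum.cong) auto
    finally show ?thesis unfolding ReS .
  qed
  have tv: "(\<Sum>S\<in>Pow {..<n}. w S) = 1"
  proof -
    have "1 = Re (trace_op n \<rho>)" using dens unfolding density_op_def by simp
    also have "\<dots> = Re (tr_prod n (tensor n (\<lambda>k. idm)) \<rho>)" by (simp add: tr_prod_id)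
    also have "\<dots> = Re (\<Sum>S\<in>Pow {..<n}. (\<Prod>k\<in>S. 1) * tr_prod n (Eop \<psi> n S) \<rho>)"
    proof -
      have eq: "(\<lambda>k::nat. idm) = (\<lambda>k a b. proj \<psi> a b + (\<lambda>k. 1) k * Qm \<psi> a b)"
        by (intro ext) (simp add: Qm_def)
      then show ?thesis by (subst eq) (rule arg_cong[where f=Re], rule tr_expand)
    qed
    also have "\<dots> = (\<Sum>S\<in>Pow {..<n}. w S)" unfolding w_def prod.neutral_const mult_1 Re_sum ..
    finally show ?thesis by simp
  qed
  define A where "A m = (\<Sum>S\<in>Tset n m. w S)" for m
  have A0: "0 \<le> A m" for m unfolding A_def using w0 by (intro sum_nonneg) auto
  have A1: "(\<Sum>m\<le>n. A m) = 1" unfolding A_def using tv group_card[of w n] by (simp only:)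
  have pA: "p_val N \<psi> lam \<rho> = (\<Sum>m\<le>n. A m * pm n lam m)"
    unfolding pv A_def by (rule aggregate(1)[OF n winv])
  have fA: "f_val N \<psi> lam \<rho> = (\<Sum>m\<le>n. A m * fm n lam m)"
    unfolding fv A_def by (rule aggregate(2)[OF n winv])
  have pk: "lam ^ k \<le> (\<Sum>m\<le>n. A m * pm n lam m)" using p unfolding pA .
  show ?thesis unfolding pA fA by (rule LP_lower[OF n k l A0 A1 pk])
qed

end



lemma qform_lin:
  assumes "finite A"
  shows "qform n (\<lambda>i j. \<Sum>S\<in>A. \<alpha> S * B S i j) v = (\<Sum>S\<in>A. \<alpha> S * qform n (B S) v)"
proof -
  have "qform n (\<lambda>i j. \<Sum>S\<in>A. \<alpha> S * B S i j) v
      = (\<Sum>i\<in>tuples n. \<Sum>j\<in>tuples n. \<Sum>S\<in>A. \<alpha> S * (cnj (v i) * B S i j * v j))"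
    unfolding qform_def by (simp add: sum_distrib_left sum_distrib_right mult_ac)
  also have "\<dots> = (\<Sum>i\<in>tuples n. \<Sum>S\<in>A. \<Sum>j\<in>tuples n. \<alpha> S * (cnj (v i) * B S i j * v j))"
    by (rule sum.cong[OF refl], rule sum.swap)
  also have "\<dots> = (\<Sum>S\<in>A. \<Sum>i\<in>tuples n. \<Sum>j\<in>tuples n. \<alpha> S * (cnj (v i) * B S i j * v j))"
    by (rule sum.swap)
  also have "\<dots> = (\<Sum>S\<in>A. \<alpha> S * qform n (B S) v)"
    unfolding qform_def by (simp add: sum_distrib_left)
  finally show ?thesis .
qed

lemma trace_lin:
  "trace_op n (\<lambda>i j. \<Sum>S\<in>A. \<alpha> S * B S i j) = (\<Sum>S\<in>A. \<alpha> S * trace_op n (B S))"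
  unfolding trace_op_def by (simp add: sum_distrib_left) (rule sum.swap)

lemma tr_prod_lin2:
  assumes "finite A"
  shows "tr_prod n M (\<lambda>i j. \<Sum>S\<in>A. \<alpha> S * B S i j) = (\<Sum>S\<in>A. \<alpha> S * tr_prod n M (B S))"
proof -
  have "tr_prod n M (\<lambda>i j. \<Sum>S\<in>A. \<alpha> S * B S i j)
      = (\<Sum>i\<in>tuples n. \<Sum>j\<in>tuples n. \<Sum>S\<in>A. \<alpha> S * (M i j * B S j i))"
    unfolding tr_prod_def by (simp add: sum_distrib_left mult_ac)
  also have "\<dots> = (\<Sum>i\<in>tuples n. \<Sum>S\<in>A. \<Sum>j\<in>tuples n. \<alpha> S * (M i j * B S j i))"
    by (rule sum.cong[OF refl], rule sum.swap)
  also have "\<dots> = (\<Sum>S\<in>A. \<Sum>i\<in>tuples n. \<Sum>j\<in>tuples n. \<alpha> S * (M i j * B S j i))"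
    by (rule sum.swap)
  also have "\<dots> = (\<Sum>S\<in>A. \<alpha> S * tr_prod n M (B S))"
    unfolding tr_prod_def by (simp add: sum_distrib_left)
  finally show ?thesis .
qed

lemma prod_restrict:
  fixes n :: nat
  assumes "S \<subseteq> {..<n}"
  shows "(\<Prod>k<n. if k \<in> S then g k else 1) = (\<Prod>k\<in>S. g k)"
proof -
  have "(\<Prod>k<n. if k \<in> S then g k else 1) = (\<Prod>k\<in>{..<n} \<inter> {k. k \<in> S}. g k) * (\<Prod>k\<in>{..<n} \<inter> - {k. k \<in> S}. 1)"
    by (rule prod.If_cases) simp
  also have "{..<n} \<inter> {k. k \<in> S} = S" using assms by auto
  finally show ?thesis by simp
qed

definition Qn :: "('d::finite \<Rightarrow> complex) \<Rightarrow> 'd \<Rightarrow> 'd \<Rightarrow> complex" where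
  "Qn \<psi> a b = complex_of_real (1 / (real CARD('d) - 1)) * Qm \<psi> a b"

definition Rop :: "('d::finite \<Rightarrow> complex) \<Rightarrow> nat \<Rightarrow> nat set \<Rightarrow> 'd op" where
  "Rop \<psi> n S = tensor n (\<lambda>k. if k \<in> S then Qn \<psi> else proj \<psi>)"

definition wit :: "('d::finite \<Rightarrow> complex) \<Rightarrow> nat \<Rightarrow> (nat \<Rightarrow> real) \<Rightarrow> 'd op" where
  "wit \<psi> n q = (\<lambda>i j. \<Sum>S\<in>Pow {..<n}. complex_of_real (q (card S)) * Rop \<psi> n S i j)"

context
  fixes \<psi> :: "'d::finite \<Rightarrow> complex"
  assumes u: "unit_vec \<psi>" and D2: "CARD('d) \<ge> 2"
begin

definition cc :: real where "cc = 1 / (real CARD('d) - 1)"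

lemma cc_pos: "0 < cc" unfolding cc_def using D2 by simp

lemma cc_mult: "complex_of_real cc * (of_nat CARD('d) - 1) = 1"
proof -
  have "real CARD('d) - 1 \<noteq> 0" using D2 by simp
  then have "cc * (real CARD('d) - 1) = 1" unfolding cc_def by simp
  then have "complex_of_real (cc * (real CARD('d) - 1)) = 1" by simp
  then show ?thesis by simp
qed

lemma Qn_alt: "Qn \<psi> = (\<lambda>a b. complex_of_real cc * Qm \<psi> a b)"
  unfolding Qn_def cc_def by (intro ext) simp

lemma gram_Qn: "Qn \<psi> a b = (\<Sum>x\<in>UNIV. (complex_of_real (sqrt cc) * Qm \<psi> a x) * cnj (complex_of_real (sqrt cc) * Qm \<psi> b x))"
proof -
  have s: "complex_of_real (sqrt cc) * cnj (complex_of_real (sqrt cc)) = complex_of_real cc"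
    using cc_pos by (simp flip: of_real_mult)
  have "(\<Sum>x\<in>UNIV. (complex_of_real (sqrt cc) * Qm \<psi> a x) * cnj (complex_of_real (sqrt cc) * Qm \<psi> b x))
      = (complex_of_real (sqrt cc) * cnj (complex_of_real (sqrt cc))) * (\<Sum>x\<in>UNIV. Qm \<psi> a x * cnj (Qm \<psi> b x))"
    by (simp add: sum_distrib_left mult_ac)
  also have "\<dots> = complex_of_real cc * Qm \<psi> a b" unfolding s gram_Q[OF u, symmetric] ..
  finally show ?thesis unfolding Qn_alt by simp
qed

lemma tr_Qn: "(\<Sum>a\<in>UNIV. Qn \<psi> a a) = 1"
proof -
  have "(\<Sum>a\<in>UNIV. Qm \<psi> a a) = of_nat CARD('d) - 1"
    unfolding Qm_def by (simp add: sum_subtractf tr_idm[OF u] tr_P[OF u])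
  then show ?thesis unfolding Qn_alt by (simp add: sum_distrib_left[symmetric] cc_mult)
qed

lemma pair_OQn: "pair (Omega \<psi> lam) (Qn \<psi>) = complex_of_real lam"
proof -
  have "pair (Omega \<psi> lam) (Qn \<psi>) = complex_of_real cc * pair (Omega \<psi> lam) (Qm \<psi>)"
    unfolding Qn_alt by (rule pair_scale_right)
  also have "\<dots> = complex_of_real lam * (complex_of_real cc * (of_nat CARD('d) - 1))"
    unfolding pair_OQ[OF u] by (simp add: mult_ac)
  finally show ?thesis unfolding cc_mult by simp
qed

lemma pair_IQn: "pair idm (Qn \<psi>) = 1"
proof -
  have "pair idm (Qn \<psi>) = complex_of_real cc * pair idm (Qm \<psi>)"
    unfolding Qn_alt by (rule pair_scale_right)
  then show ?thesis unfolding pair_IQ[OF u] cc_mult .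
qed

lemma pair_PQn: "pair (proj \<psi>) (Qn \<psi>) = 0"
proof -
  have "pair (proj \<psi>) (Qn \<psi>) = complex_of_real cc * pair (proj \<psi>) (Qm \<psi>)"
    unfolding Qn_alt by (rule pair_scale_right)
  then show ?thesis unfolding pair_PQ[OF u] by simp
qed

lemma Rop_qform:
  "qform n (Rop \<psi> n S) v \<in> \<real> \<and> 0 \<le> Re (qform n (Rop \<psi> n S) v)"
proof -
  define U where "U k = (if k \<in> S then (\<lambda>x a. complex_of_real (sqrt cc) * Qm \<psi> a x) else (\<lambda>x a. if x = undefined then \<psi> a else 0))" for k
  have g: "(if k \<in> S then Qn \<psi> else proj \<psi>) a b = (\<Sum>x\<in>UNIV. U k x a * cnj (U k x b))" for k a b
  proof (cases "k \<in> S")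
    case True
    then have "(if k \<in> S then Qn \<psi> else proj \<psi>) a b = Qn \<psi> a b" by simp
    also have "\<dots> = (\<Sum>x\<in>UNIV. (complex_of_real (sqrt cc) * Qm \<psi> a x) * cnj (complex_of_real (sqrt cc) * Qm \<psi> b x))"
      by (rule gram_Qn)
    also have "\<dots> = (\<Sum>x\<in>UNIV. U k x a * cnj (U k x b))" unfolding U_def using True by simp
    finally show ?thesis .
  next
    case False
    then have "(if k \<in> S then Qn \<psi> else proj \<psi>) a b = proj \<psi> a b" by simp
    also have "\<dots> = (\<Sum>x\<in>(UNIV::'d set). (if x = undefined then \<psi> a else 0) * cnj (if x = undefined then \<psi> b else 0))"
      by (rule gram_P[OF u])
    also have "\<dots> = (\<Sum>x\<in>UNIV. U k x a * cnj (U k x b))" unfolding U_def using False by simp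
    finally show ?thesis .
  qed
  have tg: "Rop \<psi> n S i j = (\<Sum>x\<in>tuples n. (\<Prod>k<n. U k (x k) (i k)) * cnj (\<Prod>k<n. U k (x k) (j k)))" for i j
    unfolding Rop_def by (rule tensor_gram) (rule g)
  have "qform n (Rop \<psi> n S) v = (\<Sum>x\<in>tuples n. complex_of_real ((cmod (\<Sum>i\<in>tuples n. cnj (v i) * (\<Prod>k<n. U k (x k) (i k))))\<^sup>2))"
    by (rule qform_gram[where W="\<lambda>x i. \<Prod>k<n. U k (x k) (i k)", OF finite_tuples tg])
  then show ?thesis by (simp add: Re_sum sum_nonneg)
qed

lemma Rop_trace: "trace_op n (Rop \<psi> n S) = 1"
  unfolding Rop_def trace_tensor by (rule prod.neutral) (auto simp: tr_Qn tr_P[OF u])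

lemma Rop_p:
  assumes n: "n = Suc N" and S: "S \<subseteq> {..<n}"
  shows "tr_prod n (omega_tensor N \<psi> lam idm) (Rop \<psi> n S) = complex_of_real (lam ^ card (S - {N}))"
proof -
  have "omega_tensor N \<psi> lam idm = tensor n (\<lambda>k. if k < N then Omega \<psi> lam else idm)"
    unfolding n by (intro ext) (rule omega_tensor_alt)
  then have "tr_prod n (omega_tensor N \<psi> lam idm) (Rop \<psi> n S)
      = (\<Prod>k<n. pair (if k < N then Omega \<psi> lam else idm) (if k \<in> S then Qn \<psi> else proj \<psi>))"
    unfolding Rop_def by (simp add: tr_prod_tensor)
  also have "\<dots> = (\<Prod>k<n. if k \<in> S then (if k < N then complex_of_real lam else 1) else 1)"
    by (intro prod.cong) (auto simp: pair_OQn pair_IQn pair_OP[OF u] pair_IP[OF u])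
  also have "\<dots> = (\<Prod>k\<in>S. if k < N then complex_of_real lam else 1)" by (rule prod_restrict[OF S])
  also have "\<dots> = complex_of_real (lam ^ card (S - {N}))" by (rule prod_c1) (use S n in auto)
  finally show ?thesis .
qed

lemma Rop_f:
  assumes n: "n = Suc N" and S: "S \<subseteq> {..<n}"
  shows "tr_prod n (omega_tensor N \<psi> lam (proj \<psi>)) (Rop \<psi> n S) = complex_of_real (if N \<in> S then 0 else lam ^ card S)"
proof -
  have "omega_tensor N \<psi> lam (proj \<psi>) = tensor n (\<lambda>k. if k < N then Omega \<psi> lam else proj \<psi>)"
    unfolding n by (intro ext) (rule omega_tensor_alt)
  then have "tr_prod n (omega_tensor N \<psi> lam (proj \<psi>)) (Rop \<psi> n S)
      = (\<Prod>k<n. pair (if k < N then Omega \<psi> lam else proj \<psi>) (if k \<in> S then Qn \<psi> else proj \<psi>))"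
    unfolding Rop_def by (simp add: tr_prod_tensor)
  also have "\<dots> = (\<Prod>k<n. if k \<in> S then (if k < N then complex_of_real lam else 0) else 1)"
    by (intro prod.cong) (auto simp: pair_OQn pair_PQn pair_OP[OF u] pair_PP[OF u])
  also have "\<dots> = (\<Prod>k\<in>S. if k < N then complex_of_real lam else 0)" by (rule prod_restrict[OF S])
  also have "\<dots> = complex_of_real (if N \<in> S then 0 else lam ^ card S)" by (rule prod_c2) (use S n in auto)
  finally show ?thesis .
qed

lemma wit_perm:
  assumes p: "\<sigma> permutes {..<n}"
  shows "wit \<psi> n q (i \<circ> \<sigma>) (j \<circ> \<sigma>) = wit \<psi> n q i j"
proof -
  have r: "Rop \<psi> n S (i \<circ> \<sigma>) (j \<circ> \<sigma>) = Rop \<psi> n (\<sigma> ` S) i j" for S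
  proof -
    have "Rop \<psi> n S (i \<circ> \<sigma>) (j \<circ> \<sigma>) = tensor n (\<lambda>k. if inv \<sigma> k \<in> S then Qn \<psi> else proj \<psi>) i j"
      unfolding Rop_def by (rule tensor_perm[OF p]) (rule permutes_inverses(2)[OF p])
    also have "(\<lambda>k. if inv \<sigma> k \<in> S then Qn \<psi> else proj \<psi>) = (\<lambda>k. if k \<in> \<sigma> ` S then Qn \<psi> else proj \<psi>)"
    proof (rule ext)
      fix k
      have "inv \<sigma> k \<in> S \<longleftrightarrow> k \<in> \<sigma> ` S"
        using permutes_inverses[OF p] by (metis imageE image_eqI)
      then show "(if inv \<sigma> k \<in> S then Qn \<psi> else proj \<psi>) = (if k \<in> \<sigma> ` S then Qn \<psi> else proj \<psi>)" by simp
    qed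
    finally show ?thesis unfolding Rop_def .
  qed
  have inj: "inj \<sigma>" by (rule permutes_inj[OF p])
  have cs: "card (\<sigma> ` S) = card S" for S by (rule card_image) (rule inj_on_subset[OF inj], simp)
  have "wit \<psi> n q (i \<circ> \<sigma>) (j \<circ> \<sigma>) = (\<Sum>S\<in>Pow {..<n}. complex_of_real (q (card (\<sigma> ` S))) * Rop \<psi> n (\<sigma> ` S) i j)"
    unfolding wit_def r cs ..
  also have "\<dots> = wit \<psi> n q i j"
    unfolding wit_def
  proof (rule sum.reindex_bij_witness[where i="\<lambda>S. inv \<sigma> ` S" and j="\<lambda>S. \<sigma> ` S"])
    fix S assume "S \<in> Pow {..<n}"
    show "inv \<sigma> ` \<sigma> ` S = S" using permutes_inverses(2)[OF p] by (simp add: image_image)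
    show "\<sigma> ` S \<in> Pow {..<n}" using \<open>S \<in> Pow {..<n}\<close> permutes_image[OF p] by auto
  next
    fix S assume "S \<in> Pow {..<n}"
    show "\<sigma> ` inv \<sigma> ` S = S" using permutes_inverses(1)[OF p] by (simp add: image_image)
    show "inv \<sigma> ` S \<in> Pow {..<n}" using \<open>S \<in> Pow {..<n}\<close> permutes_image[OF permutes_inv[OF p]] by auto
  qed simp
  finally show ?thesis .
qed

end



context
  fixes \<psi> :: "'d::finite \<Rightarrow> complex"
  assumes u: "unit_vec \<psi>" and D2: "CARD('d) \<ge> 2"
begin

lemma upper_wit:
  assumes n: "n = Suc N" and k: "k \<le> N" and l: "0 < lam" "lam < 1"
    and Dpos: "0 < real k + (real N - real k) * lam"
  defines "t \<equiv> (real N - real k) * lam / (real k + (real N - real k) * lam)"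
  shows "\<exists>\<rho>. density_op n \<rho> \<and> perm_invariant n \<rho> \<and> p_val N \<psi> lam \<rho> = lam ^ k
            \<and> f_val N \<psi> lam \<rho> = t * lam ^ k"
proof -
  define Am where "Am m = (if m = k then t else if m = Suc k then 1 - t else 0)" for m
  define q where "q m = Am m / real (card (Tset n m))" for m
  define \<rho> where "\<rho> = wit \<psi> n q"
  have t0: "0 \<le> t" unfolding t_def using k l Dpos by (intro divide_nonneg_pos) auto
  have t1: "0 \<le> 1 - t"
  proof -
    have "1 - t = real k / (real k + (real N - real k) * lam)" unfolding t_def using Dpos by (simp add: field_simps)
    then show ?thesis using Dpos by simp
  qed
  have q0: "0 \<le> q m" for m unfolding q_def Am_def using t0 t1 by simp
  have sumT: "(\<Sum>S\<in>Tset n m. q (card S)) = Am m" if "m \<le> n" for m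
  proof -
    have "(\<Sum>S\<in>Tset n m. q (card S)) = (\<Sum>S\<in>Tset n m. q m)" by (rule sum.cong) (auto simp: Tset_def)
    also have "\<dots> = real (card (Tset n m)) * q m" by simp
    also have "card (Tset n m) \<noteq> 0" using Tset_nonempty[OF that] by (auto simp: card_eq_0_iff)
    then have "real (card (Tset n m)) * q m = Am m" unfolding q_def by simp
    finally show ?thesis .
  qed
  have kn: "Suc k \<le> n" using k n by simp
  have winv: "(\<lambda>S. q (card S)) (Transposition.transpose x N ` S) = (\<lambda>S. q (card S)) S" for x S
    by (simp add: card_image)
  have sumA: "(\<Sum>m\<le>n. Am m * g m) = t * g k + (1 - t) * g (Suc k)" for g
    unfolding Am_def by (rule sum_two_point[OF kn])
  have grp: "(\<Sum>S\<in>Pow {..<n}. h (card S) * q (card S)) = (\<Sum>m\<le>n. Am m * h m)" for h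
  proof -
    have "(\<Sum>S\<in>Pow {..<n}. h (card S) * q (card S)) = (\<Sum>m\<le>n. \<Sum>S\<in>Tset n m. h (card S) * q (card S))"
      by (rule group_card)
    also have "\<dots> = (\<Sum>m\<le>n. \<Sum>S\<in>Tset n m. h m * q (card S))"
      by (intro sum.cong refl) (auto simp: Tset_def)
    also have "\<dots> = (\<Sum>m\<le>n. Am m * h m)"
      by (intro sum.cong refl) (simp add: sum_distrib_left[symmetric] sumT mult.commute)
    finally show ?thesis .
  qed
  have dens: "density_op n \<rho>"
    unfolding density_op_def
  proof (intro allI conjI)
    fix v
    have qf: "qform n \<rho> v = (\<Sum>S\<in>Pow {..<n}. complex_of_real (q (card S)) * qform n (Rop \<psi> n S) v)"
      unfolding \<rho>_def wit_def by (rule qform_lin) simp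
    have R: "qform n (Rop \<psi> n S) v \<in> \<real>" "0 \<le> Re (qform n (Rop \<psi> n S) v)" for S
      using Rop_qform[OF u D2] by auto
    show "qform n \<rho> v \<in> \<real>" unfolding qf using R by (intro sum_in_Reals) auto
    show "0 \<le> Re (qform n \<rho> v)" unfolding qf Re_sum using R q0
      by (intro sum_nonneg) (simp add: mult_nonneg_nonneg)
  next
    have "trace_op n \<rho> = (\<Sum>S\<in>Pow {..<n}. complex_of_real (q (card S)) * trace_op n (Rop \<psi> n S))"
      unfolding \<rho>_def wit_def by (rule trace_lin)
    also have "\<dots> = complex_of_real (\<Sum>S\<in>Pow {..<n}. 1 * q (card S))"
      by (simp add: Rop_trace[OF u D2])
    also have "(\<Sum>S\<in>Pow {..<n}. 1 * q (card S)) = t * 1 + (1 - t) * 1"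
      unfolding grp[of "\<lambda>_. 1"] sumA ..
    finally show "trace_op n \<rho> = 1" by simp
  qed
  have pinv: "perm_invariant n \<rho>"
    unfolding perm_invariant_def \<rho>_def using wit_perm[OF u D2] by blast
  have pv: "p_val N \<psi> lam \<rho> = lam ^ k"
  proof -
    have "p_val N \<psi> lam \<rho> = Re (tr_prod n (omega_tensor N \<psi> lam idm) \<rho>)"
      unfolding p_val_def idm_eq n ..
    also have "tr_prod n (omega_tensor N \<psi> lam idm) \<rho>
        = (\<Sum>S\<in>Pow {..<n}. complex_of_real (q (card S)) * tr_prod n (omega_tensor N \<psi> lam idm) (Rop \<psi> n S))"
      unfolding \<rho>_def wit_def by (rule tr_prod_lin2) simp
    also have "\<dots> = (\<Sum>S\<in>Pow {..<n}. complex_of_real (q (card S)) * complex_of_real (lam ^ card (S - {N})))"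
      by (intro sum.cong refl) (simp add: Rop_p[OF u D2 n])
    also have "Re \<dots> = (\<Sum>S\<in>Pow {..<n}. lam ^ card (S - {N}) * q (card S))"
      by (simp add: Re_sum mult.commute)
    also have "\<dots> = (\<Sum>m\<le>n. (\<Sum>S\<in>Tset n m. q (card S)) * pm n lam m)"
      by (rule aggregate(1)[OF n, where w="\<lambda>S. q (card S)"]) (rule winv)
    also have "\<dots> = (\<Sum>m\<le>n. Am m * pm n lam m)"
      by (intro sum.cong refl) (simp add: sumT)
    also have "\<dots> = lam ^ k" unfolding sumA t_def by (rule LP_upper(1)[OF n k l Dpos])
    finally show ?thesis .
  qed
  have fv: "f_val N \<psi> lam \<rho> = t * lam ^ k"
  proof -
    have "f_val N \<psi> lam \<rho> = Re (tr_prod n (omega_tensor N \<psi> lam (proj \<psi>)) \<rho>)"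
      unfolding f_val_def n ..
    also have "tr_prod n (omega_tensor N \<psi> lam (proj \<psi>)) \<rho>
        = (\<Sum>S\<in>Pow {..<n}. complex_of_real (q (card S)) * tr_prod n (omega_tensor N \<psi> lam (proj \<psi>)) (Rop \<psi> n S))"
      unfolding \<rho>_def wit_def by (rule tr_prod_lin2) simp
    also have "\<dots> = (\<Sum>S\<in>Pow {..<n}. complex_of_real (q (card S)) * complex_of_real (if N \<in> S then 0 else lam ^ card S))"
      by (intro sum.cong refl) (simp add: Rop_f[OF u D2 n])
    also have "Re \<dots> = (\<Sum>S\<in>Pow {..<n}. (if N \<in> S then 0 else lam ^ card S) * q (card S))"
      by (simp add: Re_sum mult.commute)
    also have "\<dots> = (\<Sum>m\<le>n. (\<Sum>S\<in>Tset n m. q (card S)) * fm n lam m)"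
      by (rule aggregate(2)[OF n, where w="\<lambda>S. q (card S)"]) (rule winv)
    also have "\<dots> = (\<Sum>m\<le>n. Am m * fm n lam m)"
      by (intro sum.cong refl) (simp add: sumT)
    also have "\<dots> = t * lam ^ k" unfolding sumA t_def by (rule LP_upper(2)[OF n k l Dpos])
    finally show ?thesis .
  qed
  show ?thesis using dens pinv pv fv by blast
qed

end



lemma Dpos_lemma:
  fixes lam :: real
  assumes "1 \<le> N" "k \<le> N" "0 < lam"
  shows "0 < real k + (real N - real k) * lam"
proof (cases "k = 0")
  case True then show ?thesis using assms by simp
next
  case False
  then have "0 < real k" by simp
  moreover have "0 \<le> (real N - real k) * lam" using assms by simp
  ultimately show ?thesis by linarith
qed

theorem corollary3:
  fixes \<psi> :: "'d::finite \<Rightarrow> complex" and N :: nat and lam \<delta> :: real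
  assumes "CARD('d) \<ge> 2" and "unit_vec \<psi>"
    and "N \<ge> 1" and "0 < lam" and "lam < 1"
    and "lam ^ N \<le> \<delta>" and "\<delta> \<le> 1"
  defines "kp \<equiv> \<lceil>log lam \<delta>\<rceil>" and "km \<equiv> \<lfloor>log lam \<delta>\<rfloor>"
  shows "(real N - of_int kp) * lam / (of_int kp + (real N - of_int kp) * lam) \<le> F_fid N \<delta> lam \<psi>
       \<and> F_fid N \<delta> lam \<psi> \<le> (real N - of_int km) * lam / (of_int km + (real N - of_int km) * lam)"
proof -
  note D2 = assms(1) and u = assms(2) and N1 = assms(3) and l = assms(4,5)
  have "0 < lam ^ N" using l by simp
  then have dpos: "0 < \<delta>" using assms(6) by linarith
  have lnl: "ln lam < 0" using l by simp
  define x where "x = log lam \<delta>"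
  have x: "x = ln \<delta> / ln lam" unfolding x_def log_def ..
  have xln: "x * ln lam = ln \<delta>" unfolding x using lnl by simp
  have x0: "0 \<le> x" unfolding x using lnl dpos assms(7) by (simp add: divide_nonpos_neg)
  have "ln (lam ^ N) \<le> ln \<delta>" using assms(6) l dpos by (subst ln_le_cancel_iff) auto
  then have "real N * ln lam \<le> x * ln lam" using l xln by (simp add: ln_realpow)
  then have xN: "x \<le> real N" using lnl by simp
  define kpn where "kpn = nat kp"
  define kmn where "kmn = nat km"
  have kp0: "0 \<le> kp" unfolding kp_def x_def[symmetric] using x0 by simp
  have km0: "0 \<le> km" unfolding km_def x_def[symmetric] using x0 by simp
  have kpr: "of_int kp = real kpn" unfolding kpn_def using kp0 by simp
  have kmr: "of_int km = real kmn" unfolding kmn_def using km0 by simp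
  have kpN: "kpn \<le> N"
  proof -
    have "kp \<le> int N" unfolding kp_def x_def[symmetric] using xN by (simp add: ceiling_le_iff)
    then show ?thesis unfolding kpn_def by simp
  qed
  have kmN: "kmn \<le> N"
  proof -
    have "km \<le> int N" unfolding km_def x_def[symmetric] using xN by linarith
    then show ?thesis unfolding kmn_def by simp
  qed
  have kpx: "x \<le> real kpn" unfolding kpr[symmetric] kp_def x_def by simp
  have kmx: "real kmn \<le> x" unfolding kmr[symmetric] km_def x_def by simp
  have lkp: "lam ^ kpn \<le> \<delta>"
  proof -
    have "real kpn * ln lam \<le> x * ln lam" using kpx lnl by (simp add: mult_right_mono_neg)
    then have "ln (lam ^ kpn) \<le> ln \<delta>" using l xln by (simp add: ln_realpow)
    then show ?thesis using l dpos by simp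
  qed
  have lkm: "\<delta> \<le> lam ^ kmn"
  proof -
    have "x * ln lam \<le> real kmn * ln lam" using kmx lnl by (simp add: mult_right_mono_neg)
    then have "ln \<delta> \<le> ln (lam ^ kmn)" using l xln by (simp add: ln_realpow)
    then show ?thesis using l dpos by simp
  qed
  define Set where "Set = {f_val N \<psi> lam \<rho> / p_val N \<psi> lam \<rho> | \<rho>.
       density_op (Suc N) \<rho> \<and> perm_invariant (Suc N) \<rho> \<and> p_val N \<psi> lam \<rho> \<ge> \<delta>}"
  have F: "F_fid N \<delta> lam \<psi> = Inf Set" unfolding F_fid_def Set_def ..
  define Lp where "Lp = (real N - real kpn) * lam / (real kpn + (real N - real kpn) * lam)"
  define Lm where "Lm = (real N - real kmn) * lam / (real kmn + (real N - real kmn) * lam)"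
  have Dp: "0 < real kpn + (real N - real kpn) * lam" by (rule Dpos_lemma[OF N1 kpN l(1)])
  have Dm: "0 < real kmn + (real N - real kmn) * lam" by (rule Dpos_lemma[OF N1 kmN l(1)])
  have low: "Lp \<le> y" if "y \<in> Set" for y
  proof -
    from that obtain \<rho> where y: "y = f_val N \<psi> lam \<rho> / p_val N \<psi> lam \<rho>"
      and dens: "density_op (Suc N) \<rho>" and pinv: "perm_invariant (Suc N) \<rho>"
      and pd: "\<delta> \<le> p_val N \<psi> lam \<rho>" unfolding Set_def by blast
    have pk: "lam ^ kpn \<le> p_val N \<psi> lam \<rho>" using lkp pd by simp
    have ppos: "0 < p_val N \<psi> lam \<rho>" using pd dpos by simp
    have "(real N - real kpn) * lam * p_val N \<psi> lam \<rho> \<le> (real kpn + (real N - real kpn) * lam) * f_val N \<psi> lam \<rho>"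
      by (rule lower_rho[OF u refl kpN l dens pinv pk])
    then show ?thesis unfolding y Lp_def using Dp ppos by (simp add: divide_simps mult.commute)
  qed
  obtain \<rho>w where dw: "density_op (Suc N) \<rho>w" and pw: "perm_invariant (Suc N) \<rho>w"
    and pvw: "p_val N \<psi> lam \<rho>w = lam ^ kmn" and fvw: "f_val N \<psi> lam \<rho>w = Lm * lam ^ kmn"
    using upper_wit[OF u D2 refl kmN l Dm] unfolding Lm_def by blast
  have inS: "Lm \<in> Set"
  proof -
    have "lam ^ kmn \<noteq> 0" using l by simp
    then have "Lm = f_val N \<psi> lam \<rho>w / p_val N \<psi> lam \<rho>w" unfolding pvw fvw by simp
    moreover have "\<delta> \<le> p_val N \<psi> lam \<rho>w" using lkm pvw by simp
    ultimately show ?thesis unfolding Set_def using dw pw by blast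
  qed
  have ne: "Set \<noteq> {}" using inS by blast
  have bdd: "bdd_below Set" using low by (intro bdd_belowI) blast
  have "Lp \<le> Inf Set" using ne low by (intro cInf_greatest) auto
  moreover have "Inf Set \<le> Lm" by (rule cInf_lower[OF inS bdd])
  ultimately show ?thesis unfolding F kpr kmr Lp_def Lm_def by simp
qed

end
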